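(* The number of active faces without pre-image in the tower $(\mathcal{X}_{\alpha_s})_{s\ge0}$ is at most $n3^d$; that is, the number of active faces of $\square_{\alpha_0}$ plus, summed over all $s\ge0$, the number of active faces of $\square_{\alpha_{s+1}}$ that are not of the form $g_{\alpha_s}(f)$ for an active face $f$ of $\square_{\alpha_s}$, is at most $n3^d$.
   Context: Let $P\subset\mathbb{R}^d$ with $n=|P|$, and let $CP(P)$ be the closest-pair (Euclidean) distance of $P$. Scales $\alpha_s=\lambda2^s$ with $\lambda=CP(P)/(3d)$. Grids $G_{\alpha_s}\subset\mathbb{R}^d$: $G_{\alpha_0}=\lambda\mathbb{Z}^d$ and $G_{\alpha_{s+1}}=2(G_{\alpha_s}-O_s)+O_s+\frac{\alpha_s}{2}\varepsilon_s$ with $O_s\in G_{\alpha_s}$, $\varepsilon_s\in\{-1,1\}^d$. $\square_{\alpha_s}$: cubical complex of faces $\prod_j[x_j,x_j+m_j]$, $x\in G_{\alpha_s}$, $m_j\in\{0,\alpha_s\}$. $a_{\alpha_s}(p)$: the point of $G_{\alpha_s}$ whose Voronoi cell (closed cube of side $\alpha_s$ centered at it) contains $p$, assumed unique; active vertices $V_{\alpha_s}=a_{\alpha_s}(P)$. A face $f$ is spanned by $V$ if $f\cap V\ne\emptyset$ and $f\cap V$ lies in no facet of $f$; active faces are those spanned by $V_{\alpha_s}$. $g_{\alpha_s}$ maps $x\in G_{\alpha_s}$ to the unique $y\in G_{\alpha_{s+1}}$ whose Voronoi cell contains $x$, and a face to the convex hull of the images of its vertices (which maps active faces to active faces). $\mathcal{X}_{\alpha_s}$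 is the union over maximal active faces $f$ of the barycentric subdivisions of $f$, connected by the simplicial maps induced by $g$. *)

theory Defs
  imports "HOL-Analysis.Analysis"
begin

text \<open>Points live in \<open>real^'d\<close>, so the ambient dimension is \<open>d = CARD('d)\<close>.\<close>

definition CP :: "('a::metric_space) set \<Rightarrow> real" where
  "CP P = Min {dist p q | p q. p \<in> P \<and> q \<in> P \<and> p \<noteq> q}"

definition lam :: "(real^'d) set \<Rightarrow> real" where
  "lam P = CP P / (3 * real CARD('d))"

definition alph :: "(real^'d) set \<Rightarrow> nat \<Rightarrow> real" where
  "alph P s = lam P * 2 ^ s"

fun grid :: "(real^'d) set \<Rightarrow> (nat \<Rightarrow> real^'d) \<Rightarrow> (nat \<Rightarrow> real^'d) \<Rightarrow> nat \<Rightarrow> (real^'d) set" where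
  "grid P Or eps 0 = {x. \<forall>j. \<exists>k::int. x $ j = lam P * of_int k}"
| "grid P Or eps (Suc s) =
     (\<lambda>x. 2 *\<^sub>R (x - Or s) + Or s + (alph P s / 2) *\<^sub>R eps s) ` grid P Or eps s"

text \<open>Voronoi cell of a grid point \<open>c\<close> at scale \<open>a\<close>: closed cube of side \<open>a\<close> centred at \<open>c\<close>.\<close>
definition vcell :: "real \<Rightarrow> real^'d \<Rightarrow> (real^'d) set" where
  "vcell a c = {y. \<forall>j. \<bar>y $ j - c $ j\<bar> \<le> a / 2}"

definition nearest :: "(real^'d) set \<Rightarrow> real \<Rightarrow> real^'d \<Rightarrow> real^'d" where
  "nearest G a p = (THE c. c \<in> G \<and> p \<in> vcell a c)"

definition active_vertices :: "(real^'d) set \<Rightarrow> (nat \<Rightarrow> real^'d) \<Rightarrow> (nat \<Rightarrow> real^'d) \<Rightarrow> nat \<Rightarrow> (real^'d) set" where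
  "active_vertices P Or eps s = nearest (grid P Or eps s) (alph P s) ` P"

definition box_face :: "real^'d \<Rightarrow> real^'d \<Rightarrow> (real^'d) set" where
  "box_face x m = {y. \<forall>j. x $ j \<le> y $ j \<and> y $ j \<le> x $ j + m $ j}"

definition is_face :: "(real^'d) set \<Rightarrow> real \<Rightarrow> (real^'d) set \<Rightarrow> bool" where
  "is_face G a F \<longleftrightarrow> (\<exists>x m. x \<in> G \<and> (\<forall>j. m $ j = 0 \<or> m $ j = a) \<and> F = box_face x m)"

definition spanned :: "(real^'d) set \<Rightarrow> real \<Rightarrow> (real^'d) set \<Rightarrow> (real^'d) set \<Rightarrow> bool" where
  "spanned G a V F \<longleftrightarrow>
     (\<exists>x m. x \<in> G \<and> (\<forall>j. m $ j = 0 \<or> m $ j = a) \<and> F = box_face x m \<and>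
        F \<inter> V \<noteq> {} \<and>
        (\<forall>j. m $ j = a \<longrightarrow>
             \<not> (F \<inter> V \<subseteq> {y \<in> F. y $ j = x $ j}) \<and>
             \<not> (F \<inter> V \<subseteq> {y \<in> F. y $ j = x $ j + a})))"

definition active_faces :: "(real^'d) set \<Rightarrow> (nat \<Rightarrow> real^'d) \<Rightarrow> (nat \<Rightarrow> real^'d) \<Rightarrow> nat \<Rightarrow> (real^'d) set set" where
  "active_faces P Or eps s =
     {F. spanned (grid P Or eps s) (alph P s) (active_vertices P Or eps s) F}"

text \<open>\<open>g_{\<alpha>_s}\<close> on vertices and on faces (convex hull of the images of the vertices,
  the vertices of a face being its grid points).\<close>
definition gvert :: "(real^'d) set \<Rightarrow> (nat \<Rightarrow> real^'d) \<Rightarrow> (nat \<Rightarrow> real^'d) \<Rightarrow> nat \<Rightarrow> real^'d \<Rightarrow> real^'d" where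
  "gvert P Or eps s x = nearest (grid P Or eps (Suc s)) (alph P (Suc s)) x"

definition gface :: "(real^'d) set \<Rightarrow> (nat \<Rightarrow> real^'d) \<Rightarrow> (nat \<Rightarrow> real^'d) \<Rightarrow> nat \<Rightarrow> (real^'d) set \<Rightarrow> (real^'d) set" where
  "gface P Or eps s F = convex hull (gvert P Or eps s ` (F \<inter> grid P Or eps s))"

definition new_faces :: "(real^'d) set \<Rightarrow> (nat \<Rightarrow> real^'d) \<Rightarrow> (nat \<Rightarrow> real^'d) \<Rightarrow> nat \<Rightarrow> (real^'d) set set" where
  "new_faces P Or eps s =
     {F \<in> active_faces P Or eps (Suc s).
        \<not> (\<exists>f \<in> active_faces P Or eps s. gface P Or eps s f = F)}"

end

theory Submission
  imports Defs "HOL-Library.List_Lexorder"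
begin



lemma int_bound_zero:
  fixes a x :: real and k :: int
  assumes "a > 0" "x = a * of_int k" "\<bar>x\<bar> < a"
  shows "x = 0"
proof -
  have "\<bar>of_int k\<bar> < (1::real)" using assms by (simp add: abs_mult)
  then have "k = 0" by linarith
  then show ?thesis using assms by simp
qed

lemma int_bound_01:
  fixes a x :: real and k :: int
  assumes "a > 0" "x = a * of_int k" "0 \<le> x" "x \<le> a"
  shows "x = 0 \<or> x = a"
proof -
  have "0 \<le> a * of_int k" using assms by simp
  then have k0: "0 \<le> (of_int k::real)" using assms(1) by (simp add: zero_le_mult_iff)
  have "a * of_int k \<le> a * 1" using assms by simp
  then have k1: "(of_int k::real) \<le> 1" using assms(1) by (simp only: mult_le_cancel_left_pos)
  from k0 k1 have "k = 0 \<or> k = 1" by linarith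
  then show ?thesis using assms by auto
qed

lemma half_bound:
  fixes a x :: real and k :: int
  assumes "a > 0" "x = a / 2 + a * of_int k" "\<bar>x\<bar> < 3 * a / 2"
  shows "\<bar>x\<bar> = a / 2"
proof -
  have xe: "x = a * (1/2 + of_int k)" using assms by (simp add: algebra_simps)
  then have "\<bar>x\<bar> = a * \<bar>1/2 + of_int k\<bar>" using assms by (simp add: abs_mult)
  then have "a * \<bar>1/2 + of_int k\<bar> < a * (3/2)" using assms by simp
  then have "\<bar>1/2 + of_int k\<bar> < (3/2::real)" using assms(1) by (simp only: mult_less_cancel_left_pos)
  then have "k = 0 \<or> k = -1" by linarith
  then show ?thesis using assms by auto
qed



lemma unit_cube_hull_cart:
  "{x::real^'n. \<forall>i. 0 \<le> x$i \<and> x$i \<le> 1} = convex hull {x. \<forall>i. x$i = 0 \<or> x$i = 1}"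
proof -
  have "cbox (0::real^'n) One = convex hull {x. \<forall>i\<in>Basis. x\<bullet>i = 0 \<or> x\<bullet>i = 1}"
    by (rule unit_interval_convex_hull)
  moreover have "{x::real^'n. \<forall>i\<in>Basis. x\<bullet>i = 0 \<or> x\<bullet>i = 1} = {x. \<forall>i. x$i = 0 \<or> x$i = 1}"
  proof -
    have "(\<forall>i\<in>Basis. x\<bullet>i = 0 \<or> x\<bullet>i = 1) \<longleftrightarrow> (\<forall>i. x$i = 0 \<or> x$i = 1)" for x :: "real^'n"
      unfolding Basis_vec_def by (auto simp: inner_axis)
    then show ?thesis by simp
  qed
  moreover have "cbox (0::real^'n) One = {x::real^'n. \<forall>i. 0 \<le> x$i \<and> x$i \<le> 1}"
    unfolding Cart_1[symmetric] by (simp add: mem_box_cart set_eq_iff)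
  ultimately show ?thesis by simp
qed

lemma box_hull_cart:
  fixes l u :: "real^'n"
  assumes lu: "\<forall>j. l$j \<le> u$j"
  shows "convex hull {w. \<forall>j. w$j = l$j \<or> w$j = u$j} = {y. \<forall>j. l$j \<le> y$j \<and> y$j \<le> u$j}"
proof -
  define g where "g = (\<lambda>y::real^'n. (\<chi> j. (u$j - l$j) * y$j))"
  define f where "f = (\<lambda>y::real^'n. l + g y)"
  have gj: "g y $ j = (u$j - l$j) * y$j" for y j unfolding g_def by simp
  have fj: "f y $ j = l$j + (u$j - l$j) * y$j" for y j unfolding f_def by (simp add: gj)
  have lin: "linear g"
  proof (rule linearI)
    show "g (b1 + b2) = g b1 + g b2" for b1 b2 by (simp add: vec_eq_iff gj distrib_left)
    show "g (r *\<^sub>R b) = r *\<^sub>R g b" for r b by (simp add: vec_eq_iff gj)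
  qed
  have fg: "f ` S = (+) l ` (g ` S)" for S unfolding f_def by (simp add: image_image)
  have img1: "f ` {x. \<forall>i. x$i = 0 \<or> x$i = 1} = {w. \<forall>j. w$j = l$j \<or> w$j = u$j}"
  proof (intro equalityI subsetI)
    fix w assume "w \<in> f ` {x. \<forall>i. x$i = 0 \<or> x$i = 1}"
    then obtain x where x: "\<forall>i. x$i = 0 \<or> x$i = 1" "w = f x" by blast
    have "w$j = l$j \<or> w$j = u$j" for j using x(1)[rule_format, of j] unfolding x(2) fj by auto
    then show "w \<in> {w. \<forall>j. w$j = l$j \<or> w$j = u$j}" by simp
  next
    fix w assume "w \<in> {w. \<forall>j. w$j = l$j \<or> w$j = u$j}"
    then have w: "\<forall>j. w$j = l$j \<or> w$j = u$j" by simp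
    define x where "x = (\<chi> j. if w$j = l$j then 0 else (1::real))"
    have "f x $ j = w $ j" for j using w[rule_format, of j] unfolding fj x_def by auto
    then have "w = f x" by (simp add: vec_eq_iff)
    moreover have "x \<in> {x. \<forall>i. x$i = 0 \<or> x$i = 1}" unfolding x_def by simp
    ultimately show "w \<in> f ` {x. \<forall>i. x$i = 0 \<or> x$i = 1}" by blast
  qed
  have img2: "f ` {x::real^'n. \<forall>i. 0 \<le> x$i \<and> x$i \<le> 1} = {y. \<forall>j. l$j \<le> y$j \<and> y$j \<le> u$j}"
  proof (intro equalityI subsetI)
    fix y assume "y \<in> {y. \<forall>j. l$j \<le> y$j \<and> y$j \<le> u$j}"
    then have y: "\<forall>j. l$j \<le> y$j \<and> y$j \<le> u$j" by simp
    define x where "x = (\<chi> j. if l$j = u$j then 0 else (y$j - l$j) / (u$j - l$j))"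
    have "f x $ j = y $ j \<and> 0 \<le> x $ j \<and> x $ j \<le> 1" for j
    proof (cases "l$j = u$j")
      case True
      then have "y$j = l$j" using y[rule_format, of j] by simp
      then show ?thesis using True unfolding fj x_def by simp
    next
      case False
      then have d: "u$j - l$j > 0" using lu[rule_format, of j] by simp
      have xj: "x$j = (y$j - l$j) / (u$j - l$j)" unfolding x_def using False by simp
      have "f x $ j = y $ j" unfolding fj xj using d by simp
      moreover have "0 \<le> x $ j" unfolding xj using d y[rule_format, of j] by simp
      moreover have "x $ j \<le> 1" unfolding xj using d y[rule_format, of j] by (simp add: divide_le_eq_1)
      ultimately show ?thesis by simp
    qed
    then have "y = f x" "x \<in> {x::real^'n. \<forall>i. 0 \<le> x$i \<and> x$i \<le> 1}" by (simp_all add: vec_eq_iff)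
    then show "y \<in> f ` {x::real^'n. \<forall>i. 0 \<le> x$i \<and> x$i \<le> 1}" by blast
  next
    fix z assume "z \<in> f ` {x::real^'n. \<forall>i. 0 \<le> x$i \<and> x$i \<le> 1}"
    then obtain x where x: "\<forall>i. 0 \<le> x$i \<and> x$i \<le> 1" "z = f x" by blast
    have "l$j \<le> z$j \<and> z$j \<le> u$j" for j
    proof -
      have "0 \<le> x$j" "x$j \<le> 1" using x(1) by auto
      moreover have "0 \<le> u$j - l$j" using lu by auto
      ultimately have "0 \<le> (u$j - l$j) * x$j" "(u$j - l$j) * x$j \<le> (u$j - l$j)"
        by (simp_all add: mult_left_le)
      then show ?thesis unfolding x(2) fj by simp
    qed
    then show "z \<in> {y. \<forall>j. l$j \<le> y$j \<and> y$j \<le> u$j}" by simp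
  qed
  have "convex hull {w. \<forall>j. w$j = l$j \<or> w$j = u$j} = convex hull (f ` {x. \<forall>i. x$i = 0 \<or> x$i = 1})"
    using img1 by simp
  also have "\<dots> = f ` (convex hull {x. \<forall>i. x$i = 0 \<or> x$i = 1})"
    unfolding fg convex_hull_translation convex_hull_linear_image[OF lin] ..
  also have "\<dots> = f ` {x::real^'n. \<forall>i. 0 \<le> x$i \<and> x$i \<le> 1}"
    by (simp only: unit_cube_hull_cart)
  also have "\<dots> = {y. \<forall>j. l$j \<le> y$j \<and> y$j \<le> u$j}" by (rule img2)
  finally show ?thesis .
qed



locale tower =
  fixes P :: "(real^'d) set" and Or eps :: "nat \<Rightarrow> real^'d"
  assumes finP: "finite P" and cardP: "card P \<ge> 2"
    and OrG: "\<forall>s. Or s \<in> grid P Or eps s"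
    and epsv: "\<forall>s j. eps s $ j = 1 \<or> eps s $ j = -1"
    and uniq: "\<forall>s. \<forall>p\<in>P. \<exists>!c. c \<in> grid P Or eps s \<and> p \<in> vcell (alph P s) c"
begin

abbreviation "al \<equiv> alph P"
abbreviation "G \<equiv> grid P Or eps"
definition A :: "nat \<Rightarrow> real^'d \<Rightarrow> real^'d" where "A r p = nearest (G r) (al r) p"

fun off :: "nat \<Rightarrow> real^'d" where
  "off 0 = 0"
| "off (Suc r) = 2 *\<^sub>R off r - Or r + (al r / 2) *\<^sub>R eps r"

definition lat :: "nat \<Rightarrow> 'd \<Rightarrow> real \<Rightarrow> bool" where
  "lat r j y \<longleftrightarrow> (\<exists>k::int. y = off r $ j + al r * of_int k)"

lemma CP_pos: "CP P > 0"
proof -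
  let ?S = "{dist p q | p q. p \<in> P \<and> q \<in> P \<and> p \<noteq> q}"
  have "?S = (\<lambda>(p,q). dist p q) ` {(p,q). p \<in> P \<and> q \<in> P \<and> p \<noteq> q}" by auto
  moreover have "finite {(p,q). p \<in> P \<and> q \<in> P \<and> p \<noteq> q}"
    by (rule finite_subset[of _ "P \<times> P"]) (auto simp: finP)
  ultimately have fin: "finite ?S" by simp
  obtain p q where "p \<in> P" "q \<in> P" "p \<noteq> q"
  proof -
    have "P \<noteq> {}" using cardP by auto
    then obtain p where p: "p \<in> P" by auto
    have "card (P - {p}) = card P - 1" using p finP by simp
    then have "card (P - {p}) > 0" using cardP by simp
    then have "P - {p} \<noteq> {}" by (metis card.empty less_irrefl)
    then obtain q where "q \<in> P" "q \<noteq> p" by auto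
    then show ?thesis using that p by metis
  qed
  then have ne: "?S \<noteq> {}" by auto
  have "\<forall>x\<in>?S. x > 0" by auto
  then show ?thesis unfolding CP_def using Min_in[OF fin ne] by auto
qed

lemma lam_pos: "lam P > 0"
  unfolding lam_def using CP_pos by simp

lemma al_pos: "al r > 0"
  unfolding alph_def using lam_pos by simp

lemma al_Suc: "al (Suc r) = 2 * al r"
  unfolding alph_def by simp

lemma grid_char: "G r = {x. \<forall>j. lat r j (x $ j)}"
proof (induction r)
  case 0
  show ?case by (auto simp: lat_def alph_def)
next
  case (Suc r)
  let ?f = "\<lambda>x. 2 *\<^sub>R (x - Or r) + Or r + (al r / 2) *\<^sub>R eps r"
  have "G (Suc r) = ?f ` G r" by simp
  also have "\<dots> = {x. \<forall>j. lat (Suc r) j (x $ j)}"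
  proof safe
    fix x j assume xg: "x \<in> G r"
    obtain k where k: "x $ j = off r $ j + al r * of_int k" using Suc xg unfolding lat_def by blast
    show "lat (Suc r) j (?f x $ j)" unfolding lat_def
      by (rule exI[of _ k]) (simp add: k al_Suc algebra_simps)
  next
    fix y assume y: "\<forall>j. lat (Suc r) j (y $ j)"
    then obtain kf where kf: "\<forall>j. y $ j = off (Suc r) $ j + al (Suc r) * of_int (kf j)"
      unfolding lat_def by metis
    define x where "x = (\<chi> j. off r $ j + al r * of_int (kf j))"
    have "x \<in> G r" using Suc unfolding lat_def x_def by auto
    moreover have "y = ?f x" using kf unfolding x_def vec_eq_iff by (auto simp: al_Suc algebra_simps)
    ultimately show "y \<in> ?f ` G r" by blast
  qed
  finally show ?case .
qed

declare grid.simps(2)[simp del]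

lemma gridD: "x \<in> G r \<Longrightarrow> lat r j (x $ j)"
  using grid_char by auto

lemma gridI: "(\<And>j. lat r j (x $ j)) \<Longrightarrow> x \<in> G r"
  using grid_char by auto

lemma lat_diff: "lat r j y \<Longrightarrow> lat r j z \<Longrightarrow> \<exists>k::int. z - y = al r * of_int k"
proof -
  assume "lat r j y" "lat r j z"
  then obtain k1 k2 where "y = off r $ j + al r * of_int k1" "z = off r $ j + al r * of_int k2"
    unfolding lat_def by auto
  then have "z - y = al r * of_int (k2 - k1)" by (simp add: algebra_simps)
  then show ?thesis by blast
qed

lemma lat_add: "lat r j y \<Longrightarrow> lat r j (y + al r * of_int k)"
proof -
  assume "lat r j y"
  then obtain k1 where "y = off r $ j + al r * of_int k1" unfolding lat_def by auto
  then have "y + al r * of_int k = off r $ j + al r * of_int (k1 + k)" by (simp add: algebra_simps)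
  then show ?thesis unfolding lat_def by blast
qed

lemma lat_plus: "lat r j y \<Longrightarrow> lat r j (y + al r)"
  using lat_add[of r j y 1] by simp

lemma lat_minus: "lat r j y \<Longrightarrow> lat r j (y - al r)"
  using lat_add[of r j y "-1"] by simp

lemma lat_off: "lat r j (off r $ j)"
  unfolding lat_def by (rule exI[of _ 0]) simp

lemma half_shift:
  assumes "lat r j z" "lat (Suc r) j y"
  shows "\<exists>k::int. z - y = al r / 2 + al r * of_int k"
proof -
  obtain kz where kz: "z = off r $ j + al r * of_int kz" using assms unfolding lat_def by auto
  obtain ky where ky: "y = off (Suc r) $ j + al (Suc r) * of_int ky" using assms unfolding lat_def by auto
  obtain k0 where k0: "Or r $ j = off r $ j + al r * of_int k0" using OrG gridD unfolding lat_def by blast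
  have "eps r $ j = 1 \<or> eps r $ j = -1" using epsv by auto
  then show ?thesis
  proof
    assume e: "eps r $ j = 1"
    show ?thesis
      by (rule exI[of _ "kz + k0 - 2*ky - 1"]) (simp add: kz ky k0 e al_Suc algebra_simps)
  next
    assume e: "eps r $ j = -1"
    show ?thesis
      by (rule exI[of _ "kz + k0 - 2*ky"]) (simp add: kz ky k0 e al_Suc algebra_simps)
  qed
qed

lemma lat_Suc_down:
  assumes "lat (Suc r) j y"
  shows "lat r j (y + al r / 2)" "lat r j (y - al r / 2)"
proof -
  obtain k where k: "off r $ j - y = al r / 2 + al r * of_int k"
    using half_shift[OF lat_off assms] by auto
  have "y + al r / 2 = off r $ j + al r * of_int (-k)" using k by (simp add: algebra_simps)
  then show "lat r j (y + al r / 2)" unfolding lat_def by blast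
  have "y - al r / 2 = off r $ j + al r * of_int (-k - 1)" using k by (simp add: algebra_simps)
  then show "lat r j (y - al r / 2)" unfolding lat_def by blast
qed

end


context tower begin

lemma A_props:
  assumes "p \<in> P"
  shows "A r p \<in> G r" "\<And>j. \<bar>p $ j - A r p $ j\<bar> < al r / 2"
proof -
  have ex: "\<exists>!c. c \<in> G r \<and> p \<in> vcell (al r) c" using uniq assms by auto
  have th: "A r p \<in> G r \<and> p \<in> vcell (al r) (A r p)"
    unfolding A_def nearest_def by (rule theI'[OF ex])
  then show "A r p \<in> G r" by simp
  fix j
  have le: "\<bar>p $ j - A r p $ j\<bar> \<le> al r / 2" using th unfolding vcell_def by auto
  show "\<bar>p $ j - A r p $ j\<bar> < al r / 2"
  proof (rule ccontr)
    assume "\<not> ?thesis"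
    then have eq: "\<bar>p $ j - A r p $ j\<bar> = al r / 2" using le by simp
    define c where "c = (\<chi> i. if i = j then 2 * p $ j - A r p $ j else A r p $ i)"
    have cj: "c $ j = A r p $ j + al r \<or> c $ j = A r p $ j - al r"
      using eq unfolding c_def by (auto simp: abs_if split: if_splits)
    have "c \<in> G r"
    proof (rule gridI)
      fix i
      show "lat r i (c $ i)"
      proof (cases "i = j")
        case True
        then show ?thesis using cj gridD[OF th[THEN conjunct1]] lat_plus lat_minus by metis
      next
        case False
        then show ?thesis using gridD[OF th[THEN conjunct1]] unfolding c_def by simp
      qed
    qed
    moreover have "p \<in> vcell (al r) c"
      using th eq unfolding vcell_def c_def by (auto simp: abs_minus_commute)
    moreover have "c \<noteq> A r p"
    proof
      assume "c = A r p"
      then have "c $ j = A r p $ j" by simp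
      then show False using cj al_pos[of r] by auto
    qed
    ultimately show False using ex th by blast
  qed
qed

lemma A_unique:
  assumes "p \<in> P" "c \<in> G r" "p \<in> vcell (al r) c"
  shows "A r p = c"
proof -
  have ex: "\<exists>!c. c \<in> G r \<and> p \<in> vcell (al r) c" using uniq assms by auto
  show ?thesis unfolding A_def nearest_def using assms ex by (metis (mono_tags, lifting) the1_equality)
qed

lemma A_lat: "p \<in> P \<Longrightarrow> lat r j (A r p $ j)"
  using A_props gridD by blast

lemma A_step:
  assumes "p \<in> P"
  shows "\<bar>A (Suc r) p $ j - A r p $ j\<bar> = al r / 2"
proof -
  obtain k where k: "A r p $ j - A (Suc r) p $ j = al r / 2 + al r * of_int k"
    using half_shift[OF A_lat[OF assms] A_lat[OF assms]] by blast
  have "\<bar>A r p $ j - A (Suc r) p $ j\<bar> < 3 * al r / 2"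
    using A_props(2)[OF assms, where r=r and j=j] A_props(2)[OF assms, where r="Suc r" and j=j] al_Suc[of r]
    by arith
  then have "\<bar>A r p $ j - A (Suc r) p $ j\<bar> = al r / 2"
    using half_bound[OF al_pos k] by simp
  then show ?thesis by (simp add: abs_minus_commute)
qed

lemma gvert_exists:
  assumes "z \<in> G r"
  shows "\<exists>y. y \<in> G (Suc r) \<and> (\<forall>j. \<bar>y $ j - z $ j\<bar> = al r / 2)"
proof -
  have "\<forall>j. \<exists>yj. lat (Suc r) j yj \<and> \<bar>yj - z $ j\<bar> = al r / 2"
  proof
    fix j
    obtain k where k: "z $ j - off (Suc r) $ j = al r / 2 + al r * of_int k"
      using half_shift[OF gridD[OF assms] lat_off] by blast
    show "\<exists>yj. lat (Suc r) j yj \<and> \<bar>yj - z $ j\<bar> = al r / 2"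
    proof (cases "even k")
      case True
      then obtain m where m: "k = 2 * m" by auto
      let ?y = "off (Suc r) $ j + al (Suc r) * of_int m"
      have "lat (Suc r) j ?y" unfolding lat_def by blast
      moreover have "?y - z $ j = - (al r / 2)" using k m by (simp add: al_Suc algebra_simps)
      ultimately show ?thesis using al_pos[of r] by (intro exI[of _ ?y]) auto
    next
      case False
      then obtain m where m: "k = 2 * m + 1" by (metis odd_two_times_div_two_succ)
      let ?y = "off (Suc r) $ j + al (Suc r) * of_int (m + 1)"
      have "lat (Suc r) j ?y" unfolding lat_def by blast
      moreover have "?y - z $ j = al r / 2" using k m by (simp add: al_Suc algebra_simps)
      ultimately show ?thesis using al_pos[of r] by (intro exI[of _ ?y]) auto
    qed
  qed
  then obtain yf where yf: "\<forall>j. lat (Suc r) j (yf j) \<and> \<bar>yf j - z $ j\<bar> = al r / 2" by metis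
  show ?thesis
    by (rule exI[of _ "\<chi> j. yf j"]) (auto intro: gridI simp: yf)
qed

lemma gvert_near_eq:
  assumes "z \<in> G r" "y \<in> G (Suc r)" "\<bar>y $ j - z $ j\<bar> \<le> al r"
  shows "\<bar>y $ j - z $ j\<bar> = al r / 2"
proof -
  obtain k where k: "z $ j - y $ j = al r / 2 + al r * of_int k"
    using half_shift[OF gridD[OF assms(1)] gridD[OF assms(2)]] by blast
  have "\<bar>z $ j - y $ j\<bar> < 3 * al r / 2" using assms(3) al_pos[of r] by (simp add: abs_minus_commute)
  then show ?thesis using half_bound[OF al_pos k] by (simp add: abs_minus_commute)
qed

lemma coord_unique_Suc:
  assumes "y \<in> G (Suc r)" "y' \<in> G (Suc r)" "\<bar>y $ j - w\<bar> = al r / 2" "\<bar>y' $ j - w\<bar> = al r / 2"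
  shows "y $ j = y' $ j"
proof -
  obtain k where k: "y' $ j - y $ j = al (Suc r) * of_int k"
    using lat_diff[OF gridD[OF assms(1)] gridD[OF assms(2)]] by blast
  have "\<bar>y' $ j - y $ j\<bar> < al (Suc r)" using assms(3,4) al_Suc[of r] al_pos[of r] by arith
  then show ?thesis using int_bound_zero[OF al_pos k] by simp
qed

lemma gvert_char:
  assumes "z \<in> G r"
  shows "gvert P Or eps r z \<in> G (Suc r)" "\<And>j. \<bar>gvert P Or eps r z $ j - z $ j\<bar> = al r / 2"
    "\<And>y. y \<in> G (Suc r) \<Longrightarrow> (\<forall>j. \<bar>y $ j - z $ j\<bar> = al r / 2) \<Longrightarrow> gvert P Or eps r z = y"
proof -
  obtain y0 where y0: "y0 \<in> G (Suc r)" "\<forall>j. \<bar>y0 $ j - z $ j\<bar> = al r / 2"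
    using gvert_exists[OF assms] by blast
  have ex: "\<exists>!y. y \<in> G (Suc r) \<and> z \<in> vcell (al (Suc r)) y"
  proof
    have "\<bar>z $ j - y0 $ j\<bar> \<le> al (Suc r) / 2" for j
      using y0(2)[rule_format, of j] al_pos[of r] al_Suc[of r] by arith
    then show "y0 \<in> G (Suc r) \<and> z \<in> vcell (al (Suc r)) y0"
      using y0 unfolding vcell_def by auto
  next
    fix y assume y: "y \<in> G (Suc r) \<and> z \<in> vcell (al (Suc r)) y"
    have "\<forall>j. \<bar>y $ j - z $ j\<bar> = al r / 2"
      using y gvert_near_eq[OF assms] unfolding vcell_def al_Suc by (auto simp: abs_minus_commute)
    then have "y $ i = y0 $ i" for i
      using y y0 by (intro coord_unique_Suc[where w="z $ i"]) auto
    then show "y = y0" by (simp add: vec_eq_iff)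
  qed
  have th: "gvert P Or eps r z \<in> G (Suc r) \<and> z \<in> vcell (al (Suc r)) (gvert P Or eps r z)"
    unfolding gvert_def nearest_def by (rule theI'[OF ex])
  then show "gvert P Or eps r z \<in> G (Suc r)" by simp
  show "\<bar>gvert P Or eps r z $ j - z $ j\<bar> = al r / 2" for j
  proof -
    have "\<bar>gvert P Or eps r z $ j - z $ j\<bar> \<le> al r"
      using th unfolding vcell_def al_Suc by (auto simp: abs_minus_commute)
    then show ?thesis using gvert_near_eq[OF assms] th by blast
  qed
  show "gvert P Or eps r z = y" if "y \<in> G (Suc r)" "\<forall>j. \<bar>y $ j - z $ j\<bar> = al r / 2" for y
  proof -
    have "\<bar>z $ j - y $ j\<bar> \<le> al (Suc r) / 2" for j
      using that(2)[rule_format, of j] al_pos[of r] al_Suc[of r] by arith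
    then have "y \<in> G (Suc r) \<and> z \<in> vcell (al (Suc r)) y"
      using that unfolding vcell_def by auto
    then show ?thesis using ex th by blast
  qed
qed

lemma gvert_A:
  assumes "p \<in> P" shows "gvert P Or eps r (A r p) = A (Suc r) p"
proof -
  have z: "A r p \<in> G r" using A_props(1)[OF assms] .
  show ?thesis
    using gvert_char(3)[OF z, of "A (Suc r) p"] A_props(1)[OF assms, where r="Suc r"] A_step[OF assms] by auto
qed

lemma gvert_coord:
  assumes "z \<in> G r" "z' \<in> G r" "z $ j = z' $ j"
  shows "gvert P Or eps r z $ j = gvert P Or eps r z' $ j"
  using coord_unique_Suc[OF gvert_char(1)[OF assms(1)] gvert_char(1)[OF assms(2)]]
    gvert_char(2)[OF assms(1)] gvert_char(2)[OF assms(2)] assms(3) by metis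

end


context tower begin

definition T :: "(real^'d) set" where "T = {t. \<forall>j. t $ j = -1 \<or> t $ j = 0 \<or> t $ j = 1}"

definition lo :: "nat \<Rightarrow> real^'d \<Rightarrow> real^'d \<Rightarrow> real^'d" where
  "lo r v t = (\<chi> j. if t $ j = -1 then v $ j - al r else v $ j)"
definition ms :: "nat \<Rightarrow> real^'d \<Rightarrow> real^'d" where
  "ms r t = (\<chi> j. if t $ j = 0 then 0 else al r)"
definition Fc :: "nat \<Rightarrow> real^'d \<Rightarrow> real^'d \<Rightarrow> (real^'d) set" where
  "Fc r v t = box_face (lo r v t) (ms r t)"

lemma box_face_inj:
  assumes "\<forall>j. 0 \<le> m $ j" "\<forall>j. 0 \<le> m' $ j" "box_face x m = box_face x' m'"
  shows "x = x' \<and> m = m'"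
proof -
  have "x \<in> box_face x m" "x + m \<in> box_face x m" "x' \<in> box_face x' m'" "x' + m' \<in> box_face x' m'"
    using assms(1,2) unfolding box_face_def by auto
  then have "x \<in> box_face x' m'" "x + m \<in> box_face x' m'" "x' \<in> box_face x m" "x' + m' \<in> box_face x m"
    using assms(3) by auto
  then have a: "x $ i \<le> x' $ i" "x' $ i \<le> x $ i" "x $ i + m $ i \<le> x' $ i + m' $ i"
     "x' $ i + m' $ i \<le> x $ i + m $ i" for i
    unfolding box_face_def by auto
  have "x $ i = x' $ i \<and> m $ i = m' $ i" for i using a[of i] by linarith
  then show ?thesis by (simp add: vec_eq_iff)
qed

lemma mem_Fc:
  assumes "t \<in> T" "\<And>j. lat r j (v $ j)" "\<And>j. lat r j (w $ j)"
  shows "w \<in> Fc r v t \<longleftrightarrow> (\<forall>j. w $ j = v $ j \<or> w $ j = v $ j + t $ j * al r)"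
proof -
  have "(lo r v t $ j \<le> w $ j \<and> w $ j \<le> lo r v t $ j + ms r t $ j) \<longleftrightarrow>
        (w $ j = v $ j \<or> w $ j = v $ j + t $ j * al r)" for j
  proof -
    obtain k where k: "w $ j - v $ j = al r * of_int k" using lat_diff assms(2,3) by blast
    have tj: "t $ j = -1 \<or> t $ j = 0 \<or> t $ j = 1" using assms(1) unfolding T_def by auto
    have ap: "al r > 0" by (rule al_pos)
    show ?thesis
    proof (cases "t $ j = -1")
      case True
      have k1: "w $ j - (v $ j - al r) = al r * of_int (k + 1)" using k by (simp add: algebra_simps)
      have "v $ j - al r \<le> w $ j \<and> w $ j \<le> v $ j \<Longrightarrow> w $ j = v $ j \<or> w $ j = v $ j - al r"
        using int_bound_01[OF ap k1] by auto
      then show ?thesis using True ap unfolding lo_def ms_def by auto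
    next
      case False
      show ?thesis
      proof (cases "t $ j = 0")
        case True
        then show ?thesis using ap unfolding lo_def ms_def by auto
      next
        case False2: False
        then have t1: "t $ j = 1" using tj False by auto
        have "v $ j \<le> w $ j \<and> w $ j \<le> v $ j + al r \<Longrightarrow> w $ j = v $ j \<or> w $ j = v $ j + al r"
          using int_bound_01[OF ap k] by auto
        then show ?thesis using t1 ap unfolding lo_def ms_def by auto
      qed
    qed
  qed
  then show ?thesis unfolding Fc_def box_face_def by auto
qed

end



lemma int_split:
  fixes a y :: real and k :: int
  assumes "a > 0" "y = a * of_int k"
  shows "y \<le> 0 \<or> y \<ge> a"
proof (cases "k \<le> 0")
  case True
  then have "(of_int k::real) \<le> 0" by simp
  then show ?thesis using assms by (simp add: mult_nonneg_nonpos)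
next
  case False
  then have "(of_int k::real) \<ge> 1" by simp
  then have "a * 1 \<le> a * of_int k" using assms(1) by (intro mult_left_mono) auto
  then show ?thesis using assms by simp
qed

context tower begin

lemma AV: "active_vertices P Or eps r = A r ` P"
  unfolding active_vertices_def A_def by simp

lemma T_cases: "t \<in> T \<Longrightarrow> t $ j = -1 \<or> t $ j = 0 \<or> t $ j = 1"
  unfolding T_def by auto

lemma lo_grid: "v \<in> G r \<Longrightarrow> lo r v t \<in> G r"
  by (rule gridI) (auto simp: lo_def intro: lat_minus gridD)

lemma ms_vals: "ms r t $ j = 0 \<or> ms r t $ j = al r"
  unfolding ms_def by auto

lemma ms_nonneg: "\<forall>j. 0 \<le> ms r t $ j"
  unfolding ms_def using al_pos by (auto simp: less_imp_le)

lemma mem_Fc_A: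
  assumes "t \<in> T" "p \<in> P" "q \<in> P"
  shows "A r q \<in> Fc r (A r p) t \<longleftrightarrow> (\<forall>j. A r q $ j = A r p $ j \<or> A r q $ j = A r p $ j + t $ j * al r)"
  using mem_Fc[OF assms(1)] A_lat assms by blast

lemma self_Fc: "t \<in> T \<Longrightarrow> p \<in> P \<Longrightarrow> A r p \<in> Fc r (A r p) t"
  using mem_Fc_A by blast

lemma act_iff:
  assumes t: "t \<in> T" and p: "p \<in> P"
  shows "Fc r (A r p) t \<in> active_faces P Or eps r \<longleftrightarrow>
    (\<forall>j. t $ j \<noteq> 0 \<longrightarrow> (\<exists>q\<in>P. A r q \<in> Fc r (A r p) t \<and> A r q $ j = A r p $ j + t $ j * al r))"
    (is "?L \<longleftrightarrow> ?R")
proof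
  let ?v = "A r p"
  let ?F = "Fc r ?v t"
  have ap: "al r > 0" by (rule al_pos)
  assume L: ?L
  have "spanned (G r) (al r) (A r ` P) ?F" using L unfolding active_faces_def AV by simp
  then obtain x m where xm: "x \<in> G r" "\<forall>j. m $ j = 0 \<or> m $ j = al r" "?F = box_face x m"
    "?F \<inter> A r ` P \<noteq> {}"
    "\<forall>j. m $ j = al r \<longrightarrow> \<not> (?F \<inter> A r ` P \<subseteq> {y \<in> ?F. y $ j = x $ j}) \<and>
                           \<not> (?F \<inter> A r ` P \<subseteq> {y \<in> ?F. y $ j = x $ j + al r})"
    unfolding spanned_def by blast
  have "\<forall>j. 0 \<le> m $ j" using xm(2) ap by (metis less_imp_le order_refl)
  then have eq: "lo r ?v t = x \<and> ms r t = m"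
    using box_face_inj[OF ms_nonneg] xm(3) unfolding Fc_def by metis
  show ?R
  proof (intro allI impI)
    fix j assume tj: "t $ j \<noteq> 0"
    then have mj: "m $ j = al r" using eq unfolding ms_def by auto
    show "\<exists>q\<in>P. A r q \<in> ?F \<and> A r q $ j = ?v $ j + t $ j * al r"
    proof (cases "t $ j = 1")
      case True
      then have xj: "x $ j = ?v $ j" using eq unfolding lo_def by auto
      obtain w where w: "w \<in> ?F" "w \<in> A r ` P" "w $ j \<noteq> x $ j" using xm(5) mj by blast
      then obtain q where q: "q \<in> P" "w = A r q" by auto
      then have "A r q $ j = ?v $ j \<or> A r q $ j = ?v $ j + t $ j * al r"
        using mem_Fc_A[OF t p q(1)] w(1) by blast
      then show ?thesis using q w xj by auto
    next
      case False
      then have t1: "t $ j = -1" using T_cases[OF t] tj by auto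
      then have xj: "x $ j + al r = ?v $ j" using eq unfolding lo_def by auto
      obtain w where w: "w \<in> ?F" "w \<in> A r ` P" "w $ j \<noteq> x $ j + al r" using xm(5) mj by blast
      then obtain q where q: "q \<in> P" "w = A r q" by auto
      then have "A r q $ j = ?v $ j \<or> A r q $ j = ?v $ j + t $ j * al r"
        using mem_Fc_A[OF t p q(1)] w(1) by blast
      then show ?thesis using q w xj by auto
    qed
  qed
next
  let ?v = "A r p"
  let ?F = "Fc r ?v t"
  have ap: "al r > 0" by (rule al_pos)
  assume R: ?R
  have vF: "?v \<in> ?F" using self_Fc[OF t p] .
  show ?L
    unfolding active_faces_def spanned_def AV mem_Collect_eq
  proof (intro exI conjI allI impI)
    show "lo r ?v t \<in> G r" using lo_grid A_props(1)[OF p] by blast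
    show "ms r t $ j = 0 \<or> ms r t $ j = al r" for j by (rule ms_vals)
    show "?F = box_face (lo r ?v t) (ms r t)" unfolding Fc_def ..
    show "?F \<inter> A r ` P \<noteq> {}" using vF p by auto
    fix j assume mj: "ms r t $ j = al r"
    then have tj: "t $ j \<noteq> 0" using ap unfolding ms_def by auto
    then obtain q where q: "q \<in> P" "A r q \<in> ?F" "A r q $ j = ?v $ j + t $ j * al r" using R by blast
    have tc: "t $ j = -1 \<or> t $ j = 1" using T_cases[OF t] tj by auto
    show "\<not> ?F \<inter> A r ` P \<subseteq> {y \<in> ?F. y $ j = lo r ?v t $ j}"
    proof
      assume sub: "?F \<inter> A r ` P \<subseteq> {y \<in> ?F. y $ j = lo r ?v t $ j}"
      have "A r q $ j = lo r ?v t $ j" "?v $ j = lo r ?v t $ j" using sub q vF p by auto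
      then show False using q tc ap unfolding lo_def by auto
    qed
    show "\<not> ?F \<inter> A r ` P \<subseteq> {y \<in> ?F. y $ j = lo r ?v t $ j + al r}"
    proof
      assume sub: "?F \<inter> A r ` P \<subseteq> {y \<in> ?F. y $ j = lo r ?v t $ j + al r}"
      have "A r q $ j = lo r ?v t $ j + al r" "?v $ j = lo r ?v t $ j + al r" using sub q vF p by auto
      then show False using q tc ap unfolding lo_def by auto
    qed
  qed
qed

lemma active_nonempty:
  assumes "F \<in> active_faces P Or eps r"
  shows "\<exists>p\<in>P. A r p \<in> F"
  using assms unfolding active_faces_def spanned_def AV by blast

lemma face_of:
  assumes F: "F \<in> active_faces P Or eps r" and p: "p \<in> P" and vF: "A r p \<in> F"
  shows "\<exists>t\<in>T. F = Fc r (A r p) t"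
proof -
  let ?v = "A r p"
  have ap: "al r > 0" by (rule al_pos)
  obtain x m where xm: "x \<in> G r" "\<forall>j. m $ j = 0 \<or> m $ j = al r" "F = box_face x m"
    using F unfolding active_faces_def spanned_def by auto
  have vb: "x $ j \<le> ?v $ j \<and> ?v $ j \<le> x $ j + m $ j" for j using vF xm(3) unfolding box_face_def by auto
  have cases: "(m $ j = 0 \<and> ?v $ j = x $ j) \<or> (m $ j = al r \<and> ?v $ j = x $ j) \<or> (m $ j = al r \<and> ?v $ j = x $ j + al r)" for j
  proof -
    obtain k where k: "?v $ j - x $ j = al r * of_int k" using lat_diff[OF gridD[OF xm(1)] A_lat[OF p]] by blast
    show ?thesis
    proof (cases "m $ j = 0")
      case True then show ?thesis using vb[of j] by auto
    next
      case False
      then have mj: "m $ j = al r" using xm(2) by auto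
      then have "?v $ j - x $ j = 0 \<or> ?v $ j - x $ j = al r" using int_bound_01[OF ap k] vb[of j] by auto
      then show ?thesis using mj by auto
    qed
  qed
  define t where "t = (\<chi> j. if m $ j = 0 then 0 else if ?v $ j = x $ j then 1 else (-1::real))"
  have tT: "t \<in> T" unfolding T_def t_def by auto
  have "lo r ?v t $ i = x $ i" for i using cases[of i] ap unfolding lo_def t_def by auto
  then have "lo r ?v t = x" by (simp add: vec_eq_iff)
  moreover have "ms r t $ i = m $ i" for i using cases[of i] ap unfolding ms_def t_def by auto
  then have "ms r t = m" by (simp add: vec_eq_iff)
  ultimately have "F = Fc r ?v t" unfolding Fc_def using xm(3) by simp
  then show ?thesis using tT by blast
qed

end


context tower begin

lemma mono_step:
  assumes p: "p \<in> P" and q: "q \<in> P" and tau: "tau = -1 \<or> tau = 0 \<or> tau = 1"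
    and h: "A r q $ j = A r p $ j \<or> A r q $ j = A r p $ j + tau * al r"
  shows "A (Suc r) q $ j = A (Suc r) p $ j \<or> A (Suc r) q $ j = A (Suc r) p $ j + tau * al (Suc r)"
proof -
  have ap: "al r > 0" by (rule al_pos)
  have aS: "al (Suc r) = 2 * al r" by (rule al_Suc)
  obtain k where k: "A (Suc r) q $ j - A (Suc r) p $ j = al (Suc r) * of_int k"
    using lat_diff[OF A_lat[OF p] A_lat[OF q]] by blast
  have sp: "\<bar>A (Suc r) p $ j - A r p $ j\<bar> = al r / 2" by (rule A_step[OF p])
  have sq: "\<bar>A (Suc r) q $ j - A r q $ j\<bar> = al r / 2" by (rule A_step[OF q])
  show ?thesis
  proof (cases "A r q $ j = A r p $ j \<or> tau = 0")
    case True
    then have e: "A r q $ j = A r p $ j" using h by auto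
    have "\<bar>A (Suc r) q $ j - A (Suc r) p $ j\<bar> < al (Suc r)" using sp sq e aS ap by arith
    then show ?thesis using int_bound_zero[OF al_pos k] by simp
  next
    case False
    then have e: "A r q $ j = A r p $ j + tau * al r" and tn: "tau = -1 \<or> tau = 1" using h tau by auto
    from tn show ?thesis
    proof
      assume t1: "tau = 1"
      have e1: "A r q $ j = A r p $ j + al r" using e t1 by simp
      have "0 \<le> A (Suc r) q $ j - A (Suc r) p $ j" "A (Suc r) q $ j - A (Suc r) p $ j \<le> al (Suc r)"
        using sp sq e1 aS ap by arith+
      then show ?thesis using int_bound_01[OF al_pos k] t1 by auto
    next
      assume t1: "tau = -1"
      have e1: "A r q $ j = A r p $ j - al r" using e t1 by simp
      have k': "A (Suc r) p $ j - A (Suc r) q $ j = al (Suc r) * of_int (-k)" using k by simp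
      have "0 \<le> A (Suc r) p $ j - A (Suc r) q $ j" "A (Suc r) p $ j - A (Suc r) q $ j \<le> al (Suc r)"
        using sp sq e1 aS ap by arith+
      then show ?thesis using int_bound_01[OF al_pos k'] t1 by auto
    qed
  qed
qed

definition rel :: "nat \<Rightarrow> real^'d \<Rightarrow> real^'d \<Rightarrow> real^'d \<Rightarrow> bool" where
  "rel r p q t \<longleftrightarrow> (\<forall>j. A r q $ j = A r p $ j \<or> A r q $ j = A r p $ j + t $ j * al r)"

lemma rel_iter:
  assumes "p \<in> P" "q \<in> P" "t \<in> T" "rel r p q t" "r \<le> r'"
  shows "rel r' p q t"
  using assms(5,4)
proof (induction r' rule: dec_induct)
  case base then show ?case by simp
next
  case (step n)
  then show ?case unfolding rel_def using mono_step[OF assms(1,2) T_cases[OF assms(3)]] by blast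
qed

lemma rel_Fc: "t \<in> T \<Longrightarrow> p \<in> P \<Longrightarrow> q \<in> P \<Longrightarrow> A r q \<in> Fc r (A r p) t \<longleftrightarrow> rel r p q t"
  unfolding rel_def using mem_Fc_A by blast

lemma side_low:
  assumes p: "p \<in> P" and b: "lat r j (b - al r / 2)" and lt: "p $ j < b"
  shows "A r p $ j \<le> b - al r / 2"
proof -
  obtain k where k: "A r p $ j - (b - al r / 2) = al r * of_int k" using lat_diff[OF b A_lat[OF p]] by blast
  have "\<bar>p $ j - A r p $ j\<bar> < al r / 2" by (rule A_props(2)[OF p])
  then show ?thesis using int_split[OF al_pos k] lt by arith
qed

lemma side_high:
  assumes p: "p \<in> P" and b: "lat r j (b - al r / 2)" and lt: "p $ j > b"
  shows "A r p $ j \<ge> b + al r / 2"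
proof -
  obtain k where k: "A r p $ j - (b - al r / 2) = al r * of_int k" using lat_diff[OF b A_lat[OF p]] by blast
  have "\<bar>p $ j - A r p $ j\<bar> < al r / 2" by (rule A_props(2)[OF p])
  then show ?thesis using int_split[OF al_pos k] lt by arith
qed

lemma boundary_down:
  "lat (r + k) j (b - al (r + k) / 2) \<Longrightarrow> lat r j (b - al r / 2)"
proof (induction k)
  case 0 then show ?case by simp
next
  case (Suc k)
  have "lat (Suc (r + k)) j (b - al (Suc (r + k)) / 2)" using Suc.prems by simp
  then have "lat (r + k) j ((b - al (Suc (r + k)) / 2) + al (r + k) / 2)" by (rule lat_Suc_down(1))
  then have "lat (r + k) j (b - al (r + k) / 2)" by (simp add: al_Suc)
  then show ?case by (rule Suc.IH)
qed

lemma boundary_le: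
  assumes "lat s j (b - al s / 2)" "r \<le> s" shows "lat r j (b - al r / 2)"
  using boundary_down[of r "s - r" j b] assms by simp

end



lemma lex_less:
  fixes xs ys :: "real list"
  assumes "length xs = length ys" "k < length xs" "\<forall>i\<le>k. xs ! i \<le> ys ! i" "xs ! k < ys ! k"
  shows "xs < ys"
  using assms
proof (induction xs arbitrary: ys k)
  case Nil then show ?case by simp
next
  case (Cons x xs)
  then obtain y ys' where ys: "ys = y # ys'" by (cases ys) auto
  have xy: "x \<le> y" using Cons.prems(3) ys by (metis le0 nth_Cons_0)
  show ?case
  proof (cases "x < y")
    case True then show ?thesis using ys by simp
  next
    case False
    then have xe: "x = y" using xy by simp
    show ?thesis
    proof (cases k)
      case 0 then show ?thesis using Cons.prems(4) ys xe by simp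
    next
      case (Suc k')
      have "xs < ys'"
        apply (rule Cons.IH[of ys' k'])
        using Cons.prems ys Suc by auto
      then show ?thesis using ys xe by simp
    qed
  qed
qed

context tower begin

lemma gface_Fc:
  assumes t: "t \<in> T" and p: "p \<in> P"
    and far: "\<forall>j. t $ j \<noteq> 0 \<longrightarrow> (\<exists>q\<in>P. A s q $ j = A s p $ j + t $ j * al s \<and>
                 A (Suc s) q $ j = A (Suc s) p $ j + t $ j * al (Suc s))"
  shows "gface P Or eps s (Fc s (A s p) t) = Fc (Suc s) (A (Suc s) p) t"
proof -
  let ?v = "A s p" and ?v' = "A (Suc s) p" and ?g = "gvert P Or eps s"
  have vG: "?v \<in> G s" by (rule A_props(1)[OF p])
  have gv: "?g ?v = ?v'" by (rule gvert_A[OF p])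
  have g_near: "z \<in> G s \<Longrightarrow> z $ j = ?v $ j \<Longrightarrow> ?g z $ j = ?v' $ j" for z j
    using gvert_coord[OF _ vG] gv by metis
  have g_far: "z \<in> G s \<Longrightarrow> t $ j \<noteq> 0 \<Longrightarrow> z $ j = ?v $ j + t $ j * al s \<Longrightarrow>
      ?g z $ j = ?v' $ j + t $ j * al (Suc s)" for z j
  proof -
    assume z: "z \<in> G s" "t $ j \<noteq> 0" "z $ j = ?v $ j + t $ j * al s"
    obtain q where q: "q \<in> P" "A s q $ j = ?v $ j + t $ j * al s"
      "A (Suc s) q $ j = ?v' $ j + t $ j * al (Suc s)" using far z(2) by blast
    have "?g z $ j = ?g (A s q) $ j" using gvert_coord[OF z(1) A_props(1)[OF q(1)]] z(3) q(2) by simp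
    also have "\<dots> = A (Suc s) q $ j" using gvert_A[OF q(1)] by simp
    finally show ?thesis using q(3) by simp
  qed
  let ?K = "{w. \<forall>j. w $ j = ?v' $ j \<or> w $ j = ?v' $ j + t $ j * al (Suc s)}"
  have img: "?g ` (Fc s ?v t \<inter> G s) = ?K"
  proof (intro equalityI subsetI)
    fix w assume "w \<in> ?g ` (Fc s ?v t \<inter> G s)"
    then obtain z where z: "z \<in> Fc s ?v t" "z \<in> G s" and wz: "w = ?g z" by blast
    have "?g z $ j = ?v' $ j \<or> ?g z $ j = ?v' $ j + t $ j * al (Suc s)" for j
    proof -
    have "z $ j = ?v $ j \<or> z $ j = ?v $ j + t $ j * al s"
      using mem_Fc[OF t gridD[OF vG] gridD[OF z(2)]] z(1) by blast
    then show "?g z $ j = ?v' $ j \<or> ?g z $ j = ?v' $ j + t $ j * al (Suc s)"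
    proof
      assume "z $ j = ?v $ j" then show ?thesis using g_near z(2) by blast
    next
      assume zj: "z $ j = ?v $ j + t $ j * al s"
      show ?thesis
      proof (cases "t $ j = 0")
        case True then show ?thesis using g_near z(2) zj by simp
      next
        case False then show ?thesis using g_far z(2) zj by blast
      qed
    qed
    qed
    then show "w \<in> ?K" using wz by simp
  next
    fix w assume "w \<in> ?K"
    then have w: "\<forall>j. w $ j = ?v' $ j \<or> w $ j = ?v' $ j + t $ j * al (Suc s)" by simp
    define z where "z = (\<chi> j. if w $ j = ?v' $ j then ?v $ j else ?v $ j + t $ j * al s)"
    have zG: "z \<in> G s"
    proof (rule gridI)
      fix j
      have "lat s j (?v $ j)" using gridD[OF vG] .
      then show "lat s j (z $ j)" unfolding z_def using T_cases[OF t, of j]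
        by (auto intro: lat_plus lat_minus simp: diff_conv_add_uminus[symmetric])
    qed
    have zF: "z \<in> Fc s ?v t"
      using mem_Fc[OF t gridD[OF vG] gridD[OF zG]] unfolding z_def by auto
    have "?g z $ j = w $ j" for j
    proof (cases "w $ j = ?v' $ j")
      case True
      then show ?thesis using g_near[OF zG] unfolding z_def by simp
    next
      case False
      then have tj: "t $ j \<noteq> 0" and wj: "w $ j = ?v' $ j + t $ j * al (Suc s)" using w by auto
      have "z $ j = ?v $ j + t $ j * al s" unfolding z_def using False by simp
      then show ?thesis using g_far[OF zG tj] wj by simp
    qed
    then have "w = ?g z" by (simp add: vec_eq_iff)
    then show "w \<in> ?g ` (Fc s ?v t \<inter> G s)" using zF zG by blast
  qed
  let ?l = "lo (Suc s) ?v' t" and ?u = "lo (Suc s) ?v' t + ms (Suc s) t"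
  have ap: "al (Suc s) > 0" by (rule al_pos)
  have Kc: "?K = {w. \<forall>j. w $ j = ?l $ j \<or> w $ j = ?u $ j}"
  proof -
    have "(w $ j = ?v' $ j \<or> w $ j = ?v' $ j + t $ j * al (Suc s)) \<longleftrightarrow> (w $ j = ?l $ j \<or> w $ j = ?u $ j)" for w j
      using T_cases[OF t, of j] unfolding lo_def ms_def by auto
    then show ?thesis by auto
  qed
  have lu: "\<forall>j. ?l $ j \<le> ?u $ j" using ms_nonneg by simp
  have "gface P Or eps s (Fc s ?v t) = convex hull ?K" unfolding gface_def img ..
  also have "\<dots> = {y. \<forall>j. ?l $ j \<le> y $ j \<and> y $ j \<le> ?u $ j}" unfolding Kc by (rule box_hull_cart[OF lu])
  also have "\<dots> = Fc (Suc s) ?v' t" unfolding Fc_def box_face_def by simp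
  finally show ?thesis .
qed

end


context tower begin

lemma fresh:
  assumes F': "F' \<in> new_faces P Or eps s"
  shows "\<exists>p\<in>P. \<exists>t\<in>T. F' = Fc (Suc s) (A (Suc s) p) t \<and> (\<forall>r\<le>s. Fc r (A r p) t \<notin> active_faces P Or eps r)"
proof -
  have Fa: "F' \<in> active_faces P Or eps (Suc s)"
    and nopre: "\<forall>f \<in> active_faces P Or eps s. gface P Or eps s f \<noteq> F'"
    using F' unfolding new_faces_def by auto
  have "spanned (G (Suc s)) (al (Suc s)) (active_vertices P Or eps (Suc s)) F'"
    using Fa unfolding active_faces_def by simp
  then obtain x' m' where x'm': "x' \<in> G (Suc s)" "\<forall>j. m' $ j = 0 \<or> m' $ j = al (Suc s)" "F' = box_face x' m'"
    unfolding spanned_def by blast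
  define S where "S = {q \<in> P. A (Suc s) q \<in> F'}"
  have finS: "finite S" unfolding S_def using finP by simp
  have neS: "S \<noteq> {}" using active_nonempty[OF Fa] unfolding S_def by auto
  define J where "J = {j. m' $ j \<noteq> 0}"
  define mu where "mu = (\<chi> j. x' $ j + al s)"
  define D where "D r q = (\<Sum>j\<in>J. \<bar>A r q $ j - mu $ j\<bar>)" for r q
  define L where "L q = map (\<lambda>k. D (Suc s - k) q) [0..<Suc (Suc s)]" for q
  have finL: "finite (L ` S)" using finS by simp
  have neL: "L ` S \<noteq> {}" using neS by simp
  obtain p where pS: "p \<in> S" and pmin: "L p = Min (L ` S)"
    using Min_in[OF finL neL] by auto
  have pmin': "\<forall>q\<in>S. L p \<le> L q" using Min_le[OF finL] pmin by auto
  have p: "p \<in> P" and pF: "A (Suc s) p \<in> F'" using pS unfolding S_def by auto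
  obtain t where t: "t \<in> T" and Ft: "F' = Fc (Suc s) (A (Suc s) p) t"
    using face_of[OF Fa p pF] by blast
  have m'nn: "\<forall>j. 0 \<le> m' $ j" using x'm'(2) al_pos[of "Suc s"] by (metis less_imp_le order_refl)
  have eq: "lo (Suc s) (A (Suc s) p) t = x' \<and> ms (Suc s) t = m'"
    using box_face_inj[OF ms_nonneg m'nn] Ft x'm'(3) unfolding Fc_def by metis
  have J_eq: "j \<in> J \<longleftrightarrow> t $ j \<noteq> 0" for j
    using eq al_pos[of "Suc s"] unfolding J_def ms_def by (auto split: if_splits)
  have aS: "al (Suc s) = 2 * al s" by (rule al_Suc)
  have bnd: "lat r j (mu $ j - al r / 2)" if "r \<le> Suc s" for r j
  proof -
    have "mu $ j - al (Suc s) / 2 = x' $ j" unfolding mu_def using aS by simp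
    then have "lat (Suc s) j (mu $ j - al (Suc s) / 2)" using gridD[OF x'm'(1)] by simp
    then show ?thesis using boundary_le that by blast
  qed
  have pside1: "p $ j < mu $ j" if "t $ j = 1" for j
  proof -
    have "x' $ j = A (Suc s) p $ j" using eq that unfolding lo_def by auto
    moreover have "\<bar>p $ j - A (Suc s) p $ j\<bar> < al (Suc s) / 2" by (rule A_props(2)[OF p])
    ultimately show ?thesis unfolding mu_def using aS by (simp; arith)
  qed
  have pside2: "p $ j > mu $ j" if "t $ j = -1" for j
  proof -
    have "x' $ j = A (Suc s) p $ j - al (Suc s)" using eq that unfolding lo_def by auto
    moreover have "\<bar>p $ j - A (Suc s) p $ j\<bar> < al (Suc s) / 2" by (rule A_props(2)[OF p])
    ultimately show ?thesis unfolding mu_def using aS by (simp; arith)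
  qed
  have pr1: "A r p $ j \<le> mu $ j - al r / 2" if "t $ j = 1" "r \<le> Suc s" for j r
    using side_low[OF p bnd[OF that(2)] pside1[OF that(1)]] .
  have pr2: "A r p $ j \<ge> mu $ j + al r / 2" if "t $ j = -1" "r \<le> Suc s" for j r
    using side_high[OF p bnd[OF that(2)] pside2[OF that(1)]] .
  have notact: "Fc r (A r p) t \<notin> active_faces P Or eps r" if rs: "r \<le> s" for r
  proof
    assume act: "Fc r (A r p) t \<in> active_faces P Or eps r"
    have wit: "\<forall>j. t $ j \<noteq> 0 \<longrightarrow> (\<exists>q\<in>P. A r q \<in> Fc r (A r p) t \<and> A r q $ j = A r p $ j + t $ j * al r)"
      using act act_iff[OF t p] by blast
    show False
    proof (cases "\<forall>j. t $ j \<noteq> 0 \<longrightarrow> \<bar>A r p $ j - mu $ j\<bar> = al r / 2")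
      case True
      have far: "\<exists>q\<in>P. rel r p q t \<and> (\<forall>r'. r \<le> r' \<longrightarrow> r' \<le> Suc s \<longrightarrow> A r' q $ j = A r' p $ j + t $ j * al r')"
        if tj: "t $ j \<noteq> 0" for j
      proof -
        obtain q where q: "q \<in> P" "A r q \<in> Fc r (A r p) t" "A r q $ j = A r p $ j + t $ j * al r"
          using wit tj by blast
        have relq: "rel r p q t" using rel_Fc[OF t p q(1)] q(2) by blast
        have inn: "\<bar>A r p $ j - mu $ j\<bar> = al r / 2" using True tj by blast
        have rS: "r \<le> Suc s" using rs by simp
        have qA: "\<bar>q $ j - A r q $ j\<bar> < al r / 2" by (rule A_props(2)[OF q(1)])
        have "A r' q $ j = A r' p $ j + t $ j * al r'" if r': "r \<le> r'" "r' \<le> Suc s" for r'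
        proof -
          have rel': "rel r' p q t" using rel_iter[OF p q(1) t relq r'(1)] .
          then have c: "A r' q $ j = A r' p $ j \<or> A r' q $ j = A r' p $ j + t $ j * al r'"
            unfolding rel_def by blast
          have "t $ j = 1 \<or> t $ j = -1" using T_cases[OF t, of j] tj by auto
          then have "A r' q $ j \<noteq> A r' p $ j"
          proof
            assume t1: "t $ j = 1"
            have "A r p $ j = mu $ j - al r / 2" using pr1[OF t1 rS] inn by arith
            then have "A r q $ j = mu $ j + al r / 2" using q(3) t1 by simp
            then have "q $ j > mu $ j" using qA by arith
            then have "A r' q $ j \<ge> mu $ j + al r' / 2" using side_high[OF q(1) bnd[OF r'(2)]] by blast
            moreover have "A r' p $ j \<le> mu $ j - al r' / 2" using pr1[OF t1 r'(2)] .
            ultimately show ?thesis using al_pos[of r'] by arith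
          next
            assume t1: "t $ j = -1"
            have "A r p $ j = mu $ j + al r / 2" using pr2[OF t1 rS] inn by arith
            then have "A r q $ j = mu $ j - al r / 2" using q(3) t1 by simp
            then have "q $ j < mu $ j" using qA by arith
            then have "A r' q $ j \<le> mu $ j - al r' / 2" using side_low[OF q(1) bnd[OF r'(2)]] by blast
            moreover have "A r' p $ j \<ge> mu $ j + al r' / 2" using pr2[OF t1 r'(2)] .
            ultimately show ?thesis using al_pos[of r'] by arith
          qed
          then show ?thesis using c by blast
        qed
        then show ?thesis using q(1) relq by blast
      qed
      have act_s: "Fc s (A s p) t \<in> active_faces P Or eps s"
        unfolding act_iff[OF t p]
      proof (intro allI impI)
        fix j assume tj: "t $ j \<noteq> 0"
        obtain q where q: "q \<in> P" "rel r p q t" "\<forall>r'. r \<le> r' \<longrightarrow> r' \<le> Suc s \<longrightarrow> A r' q $ j = A r' p $ j + t $ j * al r'"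
          using far[OF tj] by blast
        have "rel s p q t" using rel_iter[OF p q(1) t q(2) rs] .
        then have "A s q \<in> Fc s (A s p) t" using rel_Fc[OF t p q(1)] by blast
        moreover have "A s q $ j = A s p $ j + t $ j * al s" using q(3) rs by simp
        ultimately show "\<exists>q\<in>P. A s q \<in> Fc s (A s p) t \<and> A s q $ j = A s p $ j + t $ j * al s"
          using q(1) by blast
      qed
      have "gface P Or eps s (Fc s (A s p) t) = Fc (Suc s) (A (Suc s) p) t"
      proof (rule gface_Fc[OF t p], intro allI impI)
        fix j assume tj: "t $ j \<noteq> 0"
        obtain q where q: "q \<in> P" "rel r p q t" "\<forall>r'. r \<le> r' \<longrightarrow> r' \<le> Suc s \<longrightarrow> A r' q $ j = A r' p $ j + t $ j * al r'"
          using far[OF tj] by blast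
        have "A s q $ j = A s p $ j + t $ j * al s" using q(3) rs by simp
        moreover have "A (Suc s) q $ j = A (Suc s) p $ j + t $ j * al (Suc s)" using q(3) rs by simp
        ultimately show "\<exists>q\<in>P. A s q $ j = A s p $ j + t $ j * al s \<and>
                 A (Suc s) q $ j = A (Suc s) p $ j + t $ j * al (Suc s)"
          using q(1) by blast
      qed
      then show False using nopre act_s Ft by blast
    next
      case False
      then obtain i where ti: "t $ i \<noteq> 0" and ni: "\<bar>A r p $ i - mu $ i\<bar> \<noteq> al r / 2" by blast
      obtain q where q: "q \<in> P" "A r q \<in> Fc r (A r p) t" "A r q $ i = A r p $ i + t $ i * al r"
        using wit ti by blast
      have relq: "rel r p q t" using rel_Fc[OF t p q(1)] q(2) by blast
      have "rel (Suc s) p q t" using rel_iter[OF p q(1) t relq] rs by simp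
      then have "A (Suc s) q \<in> F'" using rel_Fc[OF t p q(1)] Ft by blast
      then have qS: "q \<in> S" unfolding S_def using q(1) by simp
      have close: "\<bar>A r' q $ j - mu $ j\<bar> \<le> \<bar>A r' p $ j - mu $ j\<bar> \<and>
          (A r' q $ j = A r' p $ j + t $ j * al r' \<longrightarrow> \<bar>A r' p $ j - mu $ j\<bar> \<noteq> al r' / 2 \<longrightarrow>
             \<bar>A r' q $ j - mu $ j\<bar> < \<bar>A r' p $ j - mu $ j\<bar>)"
        if r': "r \<le> r'" "r' \<le> Suc s" and jJ: "j \<in> J" for r' j
      proof -
        have tj: "t $ j \<noteq> 0" using jJ J_eq by blast
        have rel': "rel r' p q t" using rel_iter[OF p q(1) t relq r'(1)] .
        then have c: "A r' q $ j = A r' p $ j \<or> A r' q $ j = A r' p $ j + t $ j * al r'"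
          unfolding rel_def by blast
        have ap': "al r' > 0" by (rule al_pos)
        have "t $ j = 1 \<or> t $ j = -1" using T_cases[OF t, of j] tj by auto
        then show ?thesis
        proof
          assume t1: "t $ j = 1"
          have "A r' p $ j \<le> mu $ j - al r' / 2" using pr1[OF t1 r'(2)] .
          then show ?thesis using c t1 ap' by auto
        next
          assume t1: "t $ j = -1"
          have "A r' p $ j \<ge> mu $ j + al r' / 2" using pr2[OF t1 r'(2)] .
          then show ?thesis using c t1 ap' by auto
        qed
      qed
      have Dle: "D r' q \<le> D r' p" if "r \<le> r'" "r' \<le> Suc s" for r'
        unfolding D_def by (rule sum_mono) (use close[OF that] in blast)
      have Dlt: "D r q < D r p"
        unfolding D_def
      proof (rule sum_strict_mono_ex1)
        show "finite J" by simp
        show "\<forall>j\<in>J. \<bar>A r q $ j - mu $ j\<bar> \<le> \<bar>A r p $ j - mu $ j\<bar>" using close[of r] rs by simp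
        have "i \<in> J" using J_eq ti by blast
        moreover have "\<bar>A r q $ i - mu $ i\<bar> < \<bar>A r p $ i - mu $ i\<bar>"
          using close[of r i] rs \<open>i \<in> J\<close> q(3) ni by simp
        ultimately show "\<exists>j\<in>J. \<bar>A r q $ j - mu $ j\<bar> < \<bar>A r p $ j - mu $ j\<bar>" by blast
      qed
      have "L q < L p"
      proof (rule lex_less[where k="Suc s - r"])
        show "length (L q) = length (L p)" unfolding L_def by simp
        show "Suc s - r < length (L q)" unfolding L_def by simp
        show "\<forall>k\<le>Suc s - r. L q ! k \<le> L p ! k"
        proof (intro allI impI)
          fix k assume k: "k \<le> Suc s - r"
          then have "k < Suc (Suc s)" by simp
          then have "L q ! k = D (Suc s - k) q" "L p ! k = D (Suc s - k) p"
            unfolding L_def by (simp_all del: upt_Suc)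
          then show "L q ! k \<le> L p ! k" using Dle[of "Suc s - k"] k rs by simp
        qed
        have lt: "Suc s - r < Suc (Suc s)" by simp
        have "L q ! (Suc s - r) = D (Suc s - (Suc s - r)) q" "L p ! (Suc s - r) = D (Suc s - (Suc s - r)) p"
          unfolding L_def using lt by (simp_all del: upt_Suc)
        moreover have "Suc s - (Suc s - r) = r" using rs by simp
        ultimately have "L q ! (Suc s - r) = D r q" "L p ! (Suc s - r) = D r p" by simp_all
        then show "L q ! (Suc s - r) < L p ! (Suc s - r)" using Dlt by simp
      qed
      then show False using pmin' qS by (simp add: not_le[symmetric])
    qed
  qed
  show ?thesis using p t Ft notact by blast
qed

end


context tower begin

lemma card_T: "finite T \<and> card T = 3 ^ CARD('d)"
proof -
  let ?B = "\<lambda>_::'d. {-1, 0, 1::real}"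
  have bij: "bij_betw vec_nth T (PiE UNIV ?B)"
  proof (rule bij_betwI')
    show "\<And>x y. x \<in> T \<Longrightarrow> y \<in> T \<Longrightarrow> (vec_nth x = vec_nth y) = (x = y)"
      by (simp add: vec_nth_inject)
    show "\<And>x. x \<in> T \<Longrightarrow> vec_nth x \<in> PiE UNIV ?B"
      unfolding T_def by auto
    show "\<exists>x\<in>T. y = vec_nth x" if "y \<in> PiE UNIV ?B" for y
    proof
      show "y = vec_nth (vec_lambda y)" by (simp add: fun_eq_iff)
      show "vec_lambda y \<in> T" using that unfolding T_def by (auto simp: PiE_iff)
    qed
  qed
  have fin: "finite (PiE (UNIV::'d set) ?B)" by (simp add: finite_PiE)
  have "card (PiE (UNIV::'d set) ?B) = 3 ^ CARD('d)" by (simp add: card_PiE numeral_3_eq_3)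
  then show ?thesis using bij fin bij_betw_finite bij_betw_same_card by metis
qed

definition first :: "real^'d \<Rightarrow> real^'d \<Rightarrow> nat" where
  "first p t = (LEAST r. Fc r (A r p) t \<in> active_faces P Or eps r)"

definition Phi :: "(real^'d) \<times> (real^'d) \<Rightarrow> nat \<times> (real^'d) set" where
  "Phi pt = (first (fst pt) (snd pt), Fc (first (fst pt) (snd pt)) (A (first (fst pt) (snd pt)) (fst pt)) (snd pt))"

lemma count:
  "card (active_faces P Or eps 0) + (\<Sum>s<N. card (new_faces P Or eps s)) \<le> card P * 3 ^ CARD('d)"
proof -
  define X0 where "X0 = (\<lambda>F. (0::nat, F)) ` active_faces P Or eps 0"
  define Xs where "Xs s = (\<lambda>F. (Suc s, F)) ` new_faces P Or eps s" for s
  define X where "X = X0 \<union> (\<Union>s\<in>{..<N}. Xs s)"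
  have sub: "X \<subseteq> Phi ` (P \<times> T)"
  proof
    fix z assume "z \<in> X"
    then consider (a) F where "F \<in> active_faces P Or eps 0" "z = (0, F)"
      | (b) s F where "s < N" "F \<in> new_faces P Or eps s" "z = (Suc s, F)"
      unfolding X_def X0_def Xs_def by blast
    then show "z \<in> Phi ` (P \<times> T)"
    proof cases
      case a
      obtain p where p: "p \<in> P" "A 0 p \<in> F" using active_nonempty[OF a(1)] by blast
      obtain t where t: "t \<in> T" "F = Fc 0 (A 0 p) t" using face_of[OF a(1) p] by blast
      have "first p t = 0" unfolding first_def using a(1) t(2) by (simp add: Least_eq_0)
      then have "Phi (p, t) = z" unfolding Phi_def using a(2) t(2) by simp
      then show ?thesis using p t by force
    next
      case b
      obtain p t where pt: "p \<in> P" "t \<in> T" "F = Fc (Suc s) (A (Suc s) p) t"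
        "\<forall>r\<le>s. Fc r (A r p) t \<notin> active_faces P Or eps r"
        using fresh[OF b(2)] by blast
      have Fa: "F \<in> active_faces P Or eps (Suc s)" using b(2) unfolding new_faces_def by simp
      have "first p t = Suc s" unfolding first_def
      proof (rule Least_equality)
        show "Fc (Suc s) (A (Suc s) p) t \<in> active_faces P Or eps (Suc s)" using Fa pt(3) by simp
        show "Suc s \<le> y" if "Fc y (A y p) t \<in> active_faces P Or eps y" for y
          using that pt(4) by (meson not_less_eq_eq)
      qed
      then have "Phi (p, t) = z" unfolding Phi_def using b(3) pt(3) by simp
      then show ?thesis using pt by force
    qed
  qed
  have finPT: "finite (P \<times> T)" using finP card_T by simp
  have finX: "finite X" using sub finPT finite_surj by blast
  have cX: "card X \<le> card P * 3 ^ CARD('d)"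
  proof -
    have "card X \<le> card (Phi ` (P \<times> T))" using card_mono[OF _ sub] finPT by simp
    also have "\<dots> \<le> card (P \<times> T)" by (rule card_image_le[OF finPT])
    also have "\<dots> = card P * 3 ^ CARD('d)" using card_T by (simp add: card_cartesian_product)
    finally show ?thesis .
  qed
  have inj0: "inj (\<lambda>F. (0::nat, F))" by (simp add: inj_def)
  have injS: "inj (\<lambda>F. (Suc s, F))" for s by (simp add: inj_def)
  have finX0: "finite X0" using finX unfolding X_def by simp
  have finXs: "finite (Xs s)" if "s < N" for s using finX that unfolding X_def by auto
  have c0: "card X0 = card (active_faces P Or eps 0)"
    unfolding X0_def by (rule card_image) (use inj0 in \<open>simp add: inj_on_def\<close>)
  have cs: "card (Xs s) = card (new_faces P Or eps s)" for s
    unfolding Xs_def by (rule card_image) (use injS in \<open>simp add: inj_on_def\<close>)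
  have cU: "card (\<Union>s\<in>{..<N}. Xs s) = (\<Sum>s<N. card (Xs s))"
    apply (rule card_UN_disjoint)
      apply simp
     apply (simp add: finXs)
    apply (auto simp: Xs_def)
    done
  have disj: "X0 \<inter> (\<Union>s\<in>{..<N}. Xs s) = {}" unfolding X0_def Xs_def by auto
  have "card X = card X0 + card (\<Union>s\<in>{..<N}. Xs s)"
    unfolding X_def by (rule card_Un_disjoint[OF finX0 _ disj]) (auto simp: finXs)
  then have "card X = card (active_faces P Or eps 0) + (\<Sum>s<N. card (new_faces P Or eps s))"
    using c0 cs cU by simp
  then show ?thesis using cX by simp
qed

end

theorem lemma13:
  fixes P :: "(real^'d) set" and Or eps :: "nat \<Rightarrow> real^'d" and N :: nat
  assumes "finite P" and "card P \<ge> 2"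
    and "\<forall>s. Or s \<in> grid P Or eps s"
    and "\<forall>s j. eps s $ j = 1 \<or> eps s $ j = -1"
    and "\<forall>s. \<forall>p\<in>P. \<exists>!c. c \<in> grid P Or eps s \<and> p \<in> vcell (alph P s) c"
  shows "card (active_faces P Or eps 0) + (\<Sum>s<N. card (new_faces P Or eps s))
           \<le> card P * 3 ^ CARD('d)"
proof -
  interpret tower P Or eps using assms by unfold_locales
  show ?thesis by (rule count)
qed

end
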